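(* Let $n \ge 1$, $1 \le q \le n$, $S \subseteq B_n$, $r \in [0:n-1]$ and $b \in \{0,1\}$ such that $1 \le |S(r,b)| \le |S(r,1-b)|$. Then $$m_q(S) \le m_q(S(r,1-b)) + m_q(S(r,b)) + m_{q-1}(S(r,b)).$$
   Context: $B_n = \{0,1\}^n$ with coordinates $x = (x_{n-1},\ldots,x_0)$. For $S \subseteq B_n$, $r \in [0:n-1]$, $c \in \{0,1\}$: $S(r,c) = \{x \in S : x_r = c\}$. A $q$-dimensional subcube of $B_n$ is a set $\{x \in B_n : x_i = b(i) \text{ for all } i \in Q\}$ with $Q \subseteq [0:n-1]$, $|Q| = n-q$, $b: Q \to \{0,1\}$. $m_q(T)$ denotes the number of $q$-dimensional subcubes of $B_n$ contained in $T \subseteq B_n$ (for $q = 0$ this is $|T|$). *)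

theory Defs
  imports Main
begin

definition cube :: "nat \<Rightarrow> bool list set" where
  "cube n = {x. length x = n}"

definition slice :: "bool list set \<Rightarrow> nat \<Rightarrow> bool \<Rightarrow> bool list set" where
  "slice S r c = {x \<in> S. x ! r = c}"

definition subcube :: "nat \<Rightarrow> nat set \<Rightarrow> (nat \<Rightarrow> bool) \<Rightarrow> bool list set" where
  "subcube n Q b = {x \<in> cube n. \<forall>i\<in>Q. x ! i = b i}"

definition is_subcube :: "nat \<Rightarrow> nat \<Rightarrow> bool list set \<Rightarrow> bool" where
  "is_subcube n q C \<longleftrightarrow> (\<exists>Q b. Q \<subseteq> {..<n} \<and> card Q = n - q \<and> C = subcube n Q b)"

definition m :: "nat \<Rightarrow> nat \<Rightarrow> bool list set \<Rightarrow> nat" where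
  "m n q T = card {C. is_subcube n q C \<and> C \<subseteq> T}"

end

theory Submission
  imports Defs
begin

lemma finite_cube: "finite (cube n)"
  unfolding cube_def using finite_lists_length_eq[of "UNIV::bool set" n] by simp

lemma finite_msets: "finite {C. is_subcube n q C \<and> C \<subseteq> T}"
proof -
  have "{C. is_subcube n q C \<and> C \<subseteq> T} \<subseteq> Pow (cube n)"
    by (auto simp: is_subcube_def subcube_def)
  thus ?thesis using finite_cube by (meson finite_Pow_iff finite_subset)
qed

lemma recover:
  assumes "r \<notin> Q" "r < n"
  shows "subcube n Q c = {x \<in> cube n. x[r := b] \<in> {y \<in> subcube n Q c. y ! r = b}}"
proof -
  have e: "x[r := b] ! i = x ! i" if "i \<in> Q" for x :: "bool list" and i
    using assms(1) that by (metis nth_list_update_neq)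
  show ?thesis
    unfolding subcube_def cube_def using assms(2) by (auto simp: e)
qed

theorem mainTheorem3:
  fixes n q r :: nat and S :: "bool list set" and b :: bool
  assumes "n \<ge> 1" and "1 \<le> q" and "q \<le> n"
    and "S \<subseteq> cube n" and "r < n"
    and "1 \<le> card (slice S r b)"
    and "card (slice S r b) \<le> card (slice S r (\<not> b))"
  shows "m n q S \<le> m n q (slice S r (\<not> b)) + m n q (slice S r b) + m n (q - 1) (slice S r b)"
proof -
  define A where "A = {C. is_subcube n q C \<and> C \<subseteq> S}"
  define A1 where "A1 = {C. is_subcube n q C \<and> C \<subseteq> slice S r (\<not> b)}"
  define A2 where "A2 = {C. is_subcube n q C \<and> C \<subseteq> slice S r b}"
  define A3 where "A3 = A - A1 - A2"
  define B where "B = {C. is_subcube n (q - 1) C \<and> C \<subseteq> slice S r b}"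
  define f where "f = (\<lambda>C::bool list set. {y \<in> C. y ! r = b})"
  have fin: "finite A" "finite A1" "finite A2" "finite A3" "finite B"
    proof -
    show f1: "finite A" unfolding A_def by (rule finite_msets)
    show "finite A1" unfolding A1_def by (rule finite_msets)
    show "finite A2" unfolding A2_def by (rule finite_msets)
    show "finite A3" unfolding A3_def using f1 by (intro finite_Diff)
    show "finite B" unfolding B_def by (rule finite_msets)
  qed
  have key: "\<exists>Q c. r \<notin> Q \<and> Q \<subseteq> {..<n} \<and> card Q = n - q \<and> C = subcube n Q c" if "C \<in> A3" for C
  proof -
    from that obtain Q c where Q: "Q \<subseteq> {..<n}" "card Q = n - q" "C = subcube n Q c"
      and CS: "C \<subseteq> S" and n1: "C \<notin> A1" and n2: "C \<notin> A2"
      by (auto simp: A3_def A_def is_subcube_def)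
    have "r \<notin> Q"
    proof
      assume rQ: "r \<in> Q"
      have "C \<subseteq> slice S r (c r)" using CS rQ Q(3) by (auto simp: slice_def subcube_def)
      moreover have "is_subcube n q C" using Q by (auto simp: is_subcube_def)
      ultimately show False using n1 n2 unfolding A1_def A2_def by (cases "c r = b") auto
    qed
    thus ?thesis using Q by blast
  qed
  have inj: "inj_on f A3"
  proof (rule inj_onI)
    fix C D assume C: "C \<in> A3" and D: "D \<in> A3" and e: "f C = f D"
    obtain Q c where q1: "r \<notin> Q" and q2: "C = subcube n Q c" using key[OF C] by blast
    have C': "C = {x \<in> cube n. x[r := b] \<in> f C}" unfolding f_def q2 by (rule recover[OF q1 assms(5)])
    obtain Q' c' where q1': "r \<notin> Q'" and q2': "D = subcube n Q' c'" using key[OF D] by blast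
    have D': "D = {x \<in> cube n. x[r := b] \<in> f D}" unfolding f_def q2' by (rule recover[OF q1' assms(5)])
    show "C = D" using C' D' e by simp
  qed
  have img: "f ` A3 \<subseteq> B"
  proof
    fix E assume "E \<in> f ` A3"
    then obtain C where C: "C \<in> A3" and E: "E = f C" by blast
    obtain Q c where Q: "r \<notin> Q" "Q \<subseteq> {..<n}" "card Q = n - q" "C = subcube n Q c"
      using key[OF C] by blast
    have CS: "C \<subseteq> S" using C by (auto simp: A3_def A_def)
    have fq: "finite Q" using Q(2) finite_subset by blast
    have "E = subcube n (insert r Q) (c(r := b))"
      using Q(1,4) E unfolding f_def subcube_def by auto
    moreover have "card (insert r Q) = n - (q - 1)" using Q fq assms by simp
    moreover have "insert r Q \<subseteq> {..<n}" using Q assms by auto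
    ultimately have "is_subcube n (q - 1) E" unfolding is_subcube_def by blast
    moreover have "E \<subseteq> slice S r b" using CS E unfolding f_def slice_def by auto
    ultimately show "E \<in> B" unfolding B_def by blast
  qed
  have c3: "card A3 \<le> card B" using card_inj_on_le[OF inj img fin(5)] .
  have "A \<subseteq> A1 \<union> A2 \<union> A3" unfolding A3_def by auto
  hence "card A \<le> card (A1 \<union> A2 \<union> A3)" using fin by (intro card_mono) auto
  also have "\<dots> \<le> card (A1 \<union> A2) + card A3" by (rule card_Un_le)
  also have "\<dots> \<le> card A1 + card A2 + card A3" using card_Un_le[of A1 A2] by linarith
  finally have "card A \<le> card A1 + card A2 + card B" using c3 by linarith
  thus ?thesis unfolding m_def A_def A1_def A2_def B_def .
qed

end
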